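(* For every positive integer $x$, the $T$-orbit $x,T(x),T^2(x),\dots$ contains an integer congruent to $2\pmod 9$.
   Context: $T(z)=z/2$ for $z$ even and $T(z)=(3z+1)/2$ for $z$ odd. *)

theory Defs
  imports Main
begin

definition T :: "int \<Rightarrow> int" where
  "T z = (if even z then z div 2 else (3 * z + 1) div 2)"

end

theory Submission
  imports Defs
begin

lemma T_even9: "even z \<Longrightarrow> T z mod 9 = (5*(z mod 9)) mod 9"
proof -
  assume "even z" then obtain m where z: "z = 2*m" by blast
  have t: "T z = m" using z by (simp add: T_def)
  have a: "(5*(z mod 9)) mod 9 = (5*z) mod 9" by (metis mod_mult_right_eq)
  have b: "5*z = m + 9*m" using z by simp
  have c: "(m + 9*m) mod 9 = m mod 9" by (rule mod_mult_self2)
  show ?thesis unfolding t a b c ..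
qed
lemma T_odd9: "odd z \<Longrightarrow> T z mod 9 = (6*(z mod 9)+5) mod 9"
proof -
  assume "odd z" then obtain m where z: "z = 2*m+1" by (blast elim: oddE)
  have t: "T z = 3*m+2" using z by (simp add: T_def)
  have a: "(6*(z mod 9)+5) mod 9 = (6*z+5) mod 9" by (metis mod_add_left_eq mod_mult_right_eq)
  have b: "6*z+5 = (3*m+2) + 9*(m+1)" using z by simp
  have c: "((3*m+2) + 9*(m+1)) mod 9 = (3*m+2) mod 9" by (rule mod_mult_self2)
  show ?thesis unfolding t a b c ..
qed

lemma res: "0 \<le> (r::int) \<Longrightarrow> r < 9 \<Longrightarrow> (6*r+5) mod 9 \<noteq> 2 \<Longrightarrow> (6*r+5) mod 9 = 5 \<or> (6*r+5) mod 9 = 8"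
proof -
  assume "0 \<le> r" "r < 9"
  hence "r = 0 \<or> r = 1 \<or> r = 2 \<or> r = 3 \<or> r = 4 \<or> r = 5 \<or> r = 6 \<or> r = 7 \<or> r = 8" by linarith
  thus "(6*r+5) mod 9 \<noteq> 2 \<Longrightarrow> ?thesis" by auto
qed
lemma T_pos: "z > 0 \<Longrightarrow> T z > 0"
  unfolding T_def by (cases "even z") (auto elim!: evenE oddE)
lemma T_even_dec: "z > 0 \<Longrightarrow> even z \<Longrightarrow> T z < z"
  unfolding T_def by (auto elim!: evenE)
lemma T_odd: "odd z \<Longrightarrow> 2 * (T z + 1) = 3 * (z + 1)"
proof -
  assume "odd z" then obtain m where z: "z = 2*m+1" by (blast elim: oddE)
  have t: "T z = 3*m+2" using z by (simp add: T_def)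
  show ?thesis using t z by simp
qed
lemma orbit_pos: "x > 0 \<Longrightarrow> (T ^^ k) x > 0"
  by (induction k) (auto simp: T_pos)

lemma ex_odd:
  assumes "x > 0"
  shows "\<exists>k\<ge>n. odd ((T ^^ k) x)"
proof (rule ccontr)
  assume "\<not> ?thesis"
  hence ev: "\<And>k. k \<ge> n \<Longrightarrow> even ((T ^^ k) x)" by auto
  have "\<And>j. (T ^^ (n+j)) x \<le> (T ^^ n) x - int j"
  proof -
    fix j show "(T ^^ (n+j)) x \<le> (T ^^ n) x - int j"
    proof (induction j)
      case 0 then show ?case by simp
    next
      case (Suc j)
      have "T ((T ^^ (n+j)) x) < (T ^^ (n+j)) x"
        using T_even_dec[OF orbit_pos[OF assms] ev[of "n+j"]] by simp
      then show ?case using Suc by simp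
    qed
  qed
  from this[of "nat ((T ^^ n) x)"] orbit_pos[OF assms, of "n + nat ((T ^^ n) x)"]
    orbit_pos[OF assms, of n]
  show False by simp
qed

lemma ex_even:
  assumes "x > 0"
  shows "\<exists>k\<ge>n. even ((T ^^ k) x)"
proof (rule ccontr)
  assume "\<not> ?thesis"
  hence od: "\<And>k. k \<ge> n \<Longrightarrow> odd ((T ^^ k) x)" by auto
  have eq: "\<And>j. 2^j * ((T ^^ (n+j)) x + 1) = 3^j * ((T ^^ n) x + 1)"
  proof -
    fix j show "2^j * ((T ^^ (n+j)) x + 1) = (3::int)^j * ((T ^^ n) x + 1)"
    proof (induction j)
      case 0 then show ?case by simp
    next
      case (Suc j)
      have "2 * (T ((T ^^ (n+j)) x) + 1) = 3 * ((T ^^ (n+j)) x + 1)"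
        using T_odd[OF od[of "n+j"]] by simp
      hence "2^Suc j * ((T ^^ (n+Suc j)) x + 1) = 2^j * (3 * ((T ^^ (n+j)) x + 1))"
        by simp
      also have "\<dots> = 3 * (2^j * ((T ^^ (n+j)) x + 1))" by simp
      also have "\<dots> = 3^Suc j * ((T ^^ n) x + 1)" using Suc by simp
      finally show ?case .
    qed
  qed
  define j where "j = nat ((T ^^ n) x + 1)"
  have pos: "(T ^^ n) x + 1 > 0" using orbit_pos[OF assms, of n] by simp
  have "(2::int)^j dvd 3^j * ((T ^^ n) x + 1)" using eq[of j] by (metis dvd_triv_left)
  moreover have "coprime ((2::int)^j) (3^j)" by simp
  ultimately have "(2::int)^j dvd ((T ^^ n) x + 1)"
    using coprime_dvd_mult_right_iff by blast
  hence "(2::int)^j \<le> (T ^^ n) x + 1" using pos by (simp add: zdvd_imp_le)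
  moreover have "int j < 2^j" using less_exp[of j] by (metis of_nat_less_iff of_nat_numeral of_nat_power)
  ultimately show False using pos j_def by simp
qed

theorem mainTheorem12:
  fixes x :: int
  assumes "x > 0"
  shows "\<exists>k::nat. (T ^^ k) x mod 9 = 2"
proof (rule ccontr)
  assume "\<not> ?thesis"
  hence no2: "\<And>k. (T ^^ k) x mod 9 \<noteq> 2" by auto
  have stO: "\<And>k. odd ((T ^^ k) x) \<Longrightarrow> (T ^^ Suc k) x mod 9 = (6*((T ^^ k) x mod 9)+5) mod 9"
    by (simp add: T_odd9)
  have stE: "\<And>k. even ((T ^^ k) x) \<Longrightarrow> (T ^^ Suc k) x mod 9 = (5*((T ^^ k) x mod 9)) mod 9"
    by (simp add: T_even9)
  have st: "\<And>k r s. (T ^^ k) x mod 9 = r \<Longrightarrow> (T ^^ Suc k) x mod 9 = s \<Longrightarrow>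
      (odd ((T ^^ k) x) \<and> s = (6*r+5) mod 9) \<or> (even ((T ^^ k) x) \<and> s = (5*r) mod 9)"
    using stO stE by blast
  obtain k where ok: "odd ((T ^^ k) x)" using ex_odd[OF assms, of 0] by auto
  have r: "(T ^^ Suc k) x mod 9 = 5 \<or> (T ^^ Suc k) x mod 9 = 8"
    using res[of "(T ^^ k) x mod 9"] stO[OF ok] no2[of "Suc k"] by simp
  have "\<exists>m. (T ^^ m) x mod 9 = 8"
  proof (cases "(T ^^ Suc k) x mod 9 = 8")
    case True then show ?thesis by blast
  next
    case False
    hence "(T ^^ Suc k) x mod 9 = 5" using r by simp
    hence "(T ^^ Suc (Suc k)) x mod 9 = 8 \<or> (T ^^ Suc (Suc k)) x mod 9 = 7"
      using st[OF _ refl, of "Suc k"] by auto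
    moreover have "(T ^^ Suc (Suc k)) x mod 9 = 7 \<Longrightarrow> (T ^^ Suc (Suc (Suc k))) x mod 9 = 8"
      using st[OF _ refl, of "Suc (Suc k)"] no2[of "Suc (Suc (Suc k))"] by auto
    ultimately show ?thesis by blast
  qed
  then obtain m where m: "(T ^^ m) x mod 9 = 8" by blast
  have from8: "\<And>n. (T ^^ n) x mod 9 = 8 \<Longrightarrow> odd ((T ^^ n) x) \<and> (T ^^ Suc n) x mod 9 = 8"
  proof -
    fix n assume n8: "(T ^^ n) x mod 9 = 8"
    show "odd ((T ^^ n) x) \<and> (T ^^ Suc n) x mod 9 = 8"
    proof (cases "odd ((T ^^ n) x)")
      case True then show ?thesis using stO[OF True] n8 by simp
    next
      case False
      hence "(T ^^ Suc n) x mod 9 = 4" using stE[of n] n8 by simp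
      hence "(T ^^ Suc (Suc n)) x mod 9 = 2" using st[OF _ refl, of "Suc n"] by auto
      then show ?thesis using no2 by blast
    qed
  qed
  have all: "\<And>j. (T ^^ (m+j)) x mod 9 = 8"
  proof -
    fix j show "(T ^^ (m+j)) x mod 9 = 8"
      by (induction j) (use m from8 in auto)
  qed
  obtain k' where "k' \<ge> m" "even ((T ^^ k') x)" using ex_even[OF assms, of m] by auto
  then show False using all[of "k' - m"] from8[of k'] by simp
qed

end
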